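(* Let $n\ge2$ and $x\in\{0,\dots,n-1\}$ with $x\ge\frac{n+1}{2}$. Then $g_n(x)=1$; equivalently, with $k=n+1+x$, $V_n(k)\ge N(k,n)$.
   Context: Let $\mathcal X=\{A,B,C,D\}$ and let $(X_i)_{i\ge1}$ be the first-order Markov chain on $\mathcal X$ with $\mathbb P(X_1=x)=1/4$ for all $x$ and transitions: from $A$ to $A$ or $C$ w.p. $1/2$ each; from $B$ to $B$ or $D$ w.p. $1/2$ each; from $C$ and from $D$ to each of $A,B,C,D$ w.p. $1/4$. A nonempty string is admissible if all consecutive transitions have positive probability; $\mathcal A$ is the set of admissible nonempty strings; $K(u):=-\log_2\mathbb P(X_1^m=u)$ for $u=x_1^m\in\mathcal A$. $S_k:=\#\{u\in\mathcal A:K(u)=k\}$, $N(k,\ell):=\#\{u\in\mathcal A$ of length $\ell$ with $K(u)=k\}$, $W_{<n}(k):=\sum_{\ell=1}^{n-1}N(k,\ell)$, $V_n(k):=S_k/2-W_{<n}(k)$. Shortlex source code $C$: order nonempty binary strings by length then lexicographically as $b_1,b_2,\dots$; order $\mathcal A$ as $u_1,u_2,\dots$ by increasing $K$, then increasing length, then lexicographically with $A<B<C<D$; set $C(u_j):=b_j$. Let $K_n:=K(X_1^n)$, $L_n:=|C(X_1^n)|$, $I_n:=\mathbf 1\{L_n=K_n-1\}$, $X:=\#\{i\in\{1,\dots,n-1\}:X_i\in\{C,D\}\}$, and $g_n(x):=\mathbb P(I_n=1\mid X=x)$. *)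

theory Defs
  imports Complex_Main
begin

datatype sym = A | B | C | D

fun sym_idx :: "sym \<Rightarrow> nat" where
  "sym_idx A = 0" | "sym_idx B = 1" | "sym_idx C = 2" | "sym_idx D = 3"

fun trans_prob :: "sym \<Rightarrow> sym \<Rightarrow> real" where
  "trans_prob A y = (if y = A \<or> y = C then 1/2 else 0)"
| "trans_prob B y = (if y = B \<or> y = D then 1/2 else 0)"
| "trans_prob C y = 1/4"
| "trans_prob D y = 1/4"

text \<open>P(X_1^m = u), with the uniform initial distribution.\<close>
definition str_prob :: "sym list \<Rightarrow> real" where
  "str_prob u = (1/4) * (\<Prod>i<length u - 1. trans_prob (u ! i) (u ! (i+1)))"

definition admissible :: "sym list \<Rightarrow> bool" where
  "admissible u \<longleftrightarrow> u \<noteq> [] \<and> (\<forall>i < length u - 1. trans_prob (u ! i) (u ! (i+1)) > 0)"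

definition Kc :: "sym list \<Rightarrow> real" where
  "Kc u = - log 2 (str_prob u)"

definition S_cnt :: "nat \<Rightarrow> nat" where
  "S_cnt k = card {u. admissible u \<and> Kc u = real k}"

definition N_cnt :: "nat \<Rightarrow> nat \<Rightarrow> nat" where
  "N_cnt k l = card {u. admissible u \<and> length u = l \<and> Kc u = real k}"

definition W_lt :: "nat \<Rightarrow> nat \<Rightarrow> nat" where
  "W_lt n k = (\<Sum>l = 1..<n. N_cnt k l)"

definition V_val :: "nat \<Rightarrow> nat \<Rightarrow> real" where
  "V_val n k = real (S_cnt k) / 2 - real (W_lt n k)"

definition lex_lt :: "('a \<Rightarrow> nat) \<Rightarrow> 'a list \<Rightarrow> 'a list \<Rightarrow> bool" where
  "lex_lt f xs ys \<longleftrightarrow> length xs = length ys \<and>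
     (\<exists>i < length xs. take i xs = take i ys \<and> f (xs ! i) < f (ys ! i))"

definition src_before :: "sym list \<Rightarrow> sym list \<Rightarrow> bool" where
  "src_before v u \<longleftrightarrow> Kc v < Kc u \<or>
     (Kc v = Kc u \<and> (length v < length u \<or> (length v = length u \<and> lex_lt sym_idx v u)))"

definition src_rank :: "sym list \<Rightarrow> nat" where
  "src_rank u = 1 + card {v. admissible v \<and> src_before v u}"

definition bit_idx :: "bool \<Rightarrow> nat" where
  "bit_idx b = (if b then 1 else 0)"

definition bin_rank :: "bool list \<Rightarrow> nat" where
  "bin_rank w = 1 + card {w'. w' \<noteq> [] \<and>
      (length w' < length w \<or> (length w' = length w \<and> lex_lt bit_idx w' w))}"

text \<open>C(u_j) = b_j.\<close>
definition shortlex_code :: "sym list \<Rightarrow> bool list" where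
  "shortlex_code u = (THE w. w \<noteq> [] \<and> bin_rank w = src_rank u)"

definition I_ind :: "sym list \<Rightarrow> bool" where
  "I_ind u \<longleftrightarrow> real (length (shortlex_code u)) = Kc u - 1"

definition cd_count :: "sym list \<Rightarrow> nat" where
  "cd_count u = card {i. 1 \<le> i \<and> i \<le> length u - 1 \<and> u ! (i - 1) \<in> {C, D}}"

text \<open>g_n(x) = P(I_n = 1 | X = x), the probability being that of the chain,
  summed over all strings of length n (non-admissible strings have probability 0).\<close>
definition g_fun :: "nat \<Rightarrow> nat \<Rightarrow> real" where
  "g_fun n x =
     (\<Sum>u \<in> {u. length u = n \<and> admissible u \<and> cd_count u = x \<and> I_ind u}. str_prob u) /
     (\<Sum>u \<in> {u. length u = n \<and> admissible u \<and> cd_count u = x}. str_prob u)"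

end

theory Submission
  imports Defs
begin

lemma sym_UNIV: "(UNIV :: sym set) = {A,B,C,D}"
  using sym.exhaust by auto
instance sym :: finite
  by standard (simp add: sym_UNIV)

lemma adm_Nil[simp]: "\<not> admissible []" by (simp add: admissible_def)
lemma adm_single[simp]: "admissible [s]" by (simp add: admissible_def)
lemma adm_Cons2[simp]: "admissible (s#y#r) \<longleftrightarrow> trans_prob s y > 0 \<and> admissible (y#r)"
  by (auto simp add: admissible_def less_Suc_eq_0_disj)

lemma sp_single[simp]: "str_prob [s] = 1/4" by (simp add: str_prob_def)
lemma sp_Cons2[simp]: "str_prob (s#y#r) = trans_prob s y * str_prob (y#r)"
  by (simp only: str_prob_def length_Cons diff_Suc_1 prod.lessThan_Suc_shift) simp

definition isCD :: "sym \<Rightarrow> bool" where "isCD s \<longleftrightarrow> s = C \<or> s = D"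
definition cdn :: "sym list \<Rightarrow> nat" where "cdn u = length (filter isCD (butlast u))"

lemma cdn_single[simp]: "cdn [s] = 0" by (simp add: cdn_def)
lemma cdn_Cons2[simp]: "cdn (s#y#r) = (if isCD s then 1 else 0) + cdn (y#r)"
  by (simp add: cdn_def)

lemma cd_count_eq: "cd_count u = cdn u"
proof -
  have e: "{i. 1 \<le> i \<and> i \<le> length u - 1 \<and> u ! (i - 1) \<in> {C, D}} = Suc ` {i. i < length u - 1 \<and> isCD (u ! i)}"
  proof (rule set_eqI)
    fix i
    show "i \<in> {i. 1 \<le> i \<and> i \<le> length u - 1 \<and> u ! (i - 1) \<in> {C, D}} \<longleftrightarrow> i \<in> Suc ` {i. i < length u - 1 \<and> isCD (u ! i)}"
    proof
      assume "i \<in> {i. 1 \<le> i \<and> i \<le> length u - 1 \<and> u ! (i - 1) \<in> {C, D}}"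
      then have "i = Suc (i - 1)" "i - 1 < length u - 1" "isCD (u ! (i-1))" by (auto simp: isCD_def)
      then show "i \<in> Suc ` {i. i < length u - 1 \<and> isCD (u ! i)}" by blast
    qed (auto simp: isCD_def)
  qed
  have "{i. i < length (butlast u) \<and> isCD (butlast u ! i)} = {i. i < length u - 1 \<and> isCD (u ! i)}"
    by (auto simp: nth_butlast)
  then show ?thesis
    unfolding cd_count_def cdn_def length_filter_conv_card e
    by (simp add: card_image)
qed

definition wt :: "sym list \<Rightarrow> nat" where "wt u = length u + 1 + cdn u"

lemma sp_wt: "admissible u \<Longrightarrow> str_prob u = (1/2) ^ wt u"
proof (induction u rule: induct_list012)
  case (3 s y r)
  then show ?case
    by (cases s; cases y) (auto simp: wt_def isCD_def power_add)
qed (auto simp: wt_def power2_eq_square)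

lemma Kc_wt: "admissible u \<Longrightarrow> Kc u = real (wt u)"
  by (simp add: Kc_def sp_wt log_nat_power log_divide)

lemma wt_ge: "u \<noteq> [] \<Longrightarrow> wt u \<ge> length u + 1" by (simp add: wt_def)


definition E :: "sym \<Rightarrow> nat \<Rightarrow> nat \<Rightarrow> sym list set" where
  "E s l X = {v. length v = l \<and> admissible (s#v) \<and> cdn (s#v) = X}"

definition dl :: "sym \<Rightarrow> nat" where "dl s = (if isCD s then 1 else 0)"

lemma finite_len: "finite {v :: sym list. length v = l}"
  using finite_lists_length_eq[of "UNIV :: sym set" l] by simp

lemma finite_E: "finite (E s l X)"
  by (rule finite_subset[OF _ finite_len[of l]]) (auto simp: E_def)

lemma E_0: "E s 0 X = (if X = 0 then {[]} else {})"
  by (auto simp: E_def)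

lemma E_Suc: "E s (Suc l) X = (if dl s \<le> X then (\<Union>y\<in>{y. trans_prob s y > 0}. Cons y ` E y l (X - dl s)) else {})"
proof -
  have "v \<in> E s (Suc l) X \<longleftrightarrow> v \<in> (if dl s \<le> X then (\<Union>y\<in>{y. trans_prob s y > 0}. Cons y ` E y l (X - dl s)) else {})" for v
  proof (cases v)
    case Nil then show ?thesis by (auto simp: E_def)
  next
    case (Cons y r) then show ?thesis by (auto simp: E_def dl_def)
  qed
  then show ?thesis by blast
qed

lemma card_E_Suc: "card (E s (Suc l) X) = (if dl s \<le> X then (\<Sum>y\<in>{y. trans_prob s y > 0}. card (E y l (X - dl s))) else 0)"
proof (cases "dl s \<le> X")
  case True
  have "card (\<Union>y\<in>{y. trans_prob s y > 0}. Cons y ` E y l (X - dl s)) = (\<Sum>y\<in>{y. trans_prob s y > 0}. card (Cons y ` E y l (X - dl s)))"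
    by (rule card_UN_disjoint) (auto simp: finite_E)
  also have "\<dots> = (\<Sum>y\<in>{y. trans_prob s y > 0}. card (E y l (X - dl s)))"
    by (simp add: card_image)
  finally show ?thesis using True by (simp add: E_Suc)
qed (simp add: E_Suc)

lemma succ_A: "{y. trans_prob A y > 0} = {A, C}" by auto
lemma succ_B: "{y. trans_prob B y > 0} = {B, D}" by auto
lemma succ_C: "{y. trans_prob C y > 0} = {A, B, C, D}" using sym.exhaust by auto
lemma succ_D: "{y. trans_prob D y > 0} = {A, B, C, D}" using sym.exhaust by auto

lemma card_E_all: "card (E A l X) = card (E B l X) \<and> card (E C l X) = card (E D l X) \<and>
   card (E A l X) + card (E C l X) = 2 * (l choose X) * 2 ^ X"
proof (induction l arbitrary: X)
  case 0
  then show ?case by (simp add: E_0)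
next
  case (Suc l)
  note ih = Suc
  have a: "card (E A (Suc l) X) = 2 * (l choose X) * 2 ^ X"
    using ih[of X] unfolding card_E_Suc succ_A by (simp add: dl_def isCD_def)
  have b: "card (E B (Suc l) X) = 2 * (l choose X) * 2 ^ X"
    using ih[of X] unfolding card_E_Suc succ_B by (simp add: dl_def isCD_def)
  have c: "card (E C (Suc l) X) = (if 1 \<le> X then 4 * (l choose (X - 1)) * 2 ^ (X - 1) else 0)"
    using ih[of "X - 1"] unfolding card_E_Suc succ_C by (simp add: dl_def isCD_def)
  have d: "card (E D (Suc l) X) = (if 1 \<le> X then 4 * (l choose (X - 1)) * 2 ^ (X - 1) else 0)"
    using ih[of "X - 1"] unfolding card_E_Suc succ_D by (simp add: dl_def isCD_def)
  have e: "2 * (l choose X) * 2 ^ X + (if 1 \<le> X then 4 * (l choose (X - 1)) * 2 ^ (X - 1) else 0)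
      = 2 * (Suc l choose X) * 2 ^ X"
  proof (cases X)
    case 0 then show ?thesis by simp
  next
    case (Suc X') then show ?thesis by (simp add: algebra_simps)
  qed
  show ?case using a b c d e by simp
qed

lemma N_set: "{u. admissible u \<and> length u = Suc l \<and> Kc u = real k} =
   (\<Union>s\<in>UNIV. Cons s ` (if l + 2 \<le> k then E s l (k - l - 2) else {}))"
proof -
  have "u \<in> {u. admissible u \<and> length u = Suc l \<and> Kc u = real k} \<longleftrightarrow>
       u \<in> (\<Union>s\<in>UNIV. Cons s ` (if l + 2 \<le> k then E s l (k - l - 2) else {}))" for u
  proof (cases u)
    case Nil then show ?thesis by auto
  next
    case (Cons s v)
    show ?thesis
    proof
      assume h: "u \<in> {u. admissible u \<and> length u = Suc l \<and> Kc u = real k}"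
      then have "wt u = k" using Kc_wt by auto
      then have "v \<in> E s l (k - l - 2)" "l + 2 \<le> k"
        using h Cons by (auto simp: E_def wt_def)
      then show "u \<in> (\<Union>s\<in>UNIV. Cons s ` (if l + 2 \<le> k then E s l (k - l - 2) else {}))"
        using Cons by auto
    next
      assume h: "u \<in> (\<Union>s\<in>UNIV. Cons s ` (if l + 2 \<le> k then E s l (k - l - 2) else {}))"
      then have "admissible u" "length u = Suc l" "wt u = k" using Cons
        by (auto simp: E_def wt_def split: if_splits)
      then show "u \<in> {u. admissible u \<and> length u = Suc l \<and> Kc u = real k}"
        using Kc_wt by auto
    qed
  qed
  then show ?thesis by blast
qed

definition Nf :: "nat \<Rightarrow> nat \<Rightarrow> nat" where
  "Nf k l = (if 1 \<le> l \<and> l + 1 \<le> k then 4 * ((l - 1) choose (k - l - 1)) * 2 ^ (k - l - 1) else 0)"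

lemma N_cnt_eq: "N_cnt k l = Nf k l"
proof (cases l)
  case 0
  then show ?thesis by (simp add: N_cnt_def Nf_def)
next
  case (Suc l')
  have "N_cnt k l = card (\<Union>s\<in>UNIV. Cons s ` (if l' + 2 \<le> k then E s l' (k - l' - 2) else {}))"
    unfolding N_cnt_def Suc N_set ..
  also have "\<dots> = (\<Sum>s\<in>UNIV. card (Cons s ` (if l' + 2 \<le> k then E s l' (k - l' - 2) else {})))"
    by (rule card_UN_disjoint) (auto simp: finite_E)
  also have "\<dots> = (\<Sum>s\<in>UNIV. card (if l' + 2 \<le> k then E s l' (k - l' - 2) else {}))"
    by (simp add: card_image)
  also have "\<dots> = Nf k l"
  proof (cases "l' + 2 \<le> k")
    case True
    have "k - Suc l' - 1 = k - l' - 2" by simp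
    then show ?thesis using True card_E_all[of l' "k - l' - 2"] Suc
      by (simp add: sym_UNIV Nf_def)
  next
    case False
    then show ?thesis using Suc by (simp add: Nf_def)
  qed
  finally show ?thesis .
qed


lemma choose_id: "((Suc M) choose j) * (Suc M - j) * (M - j) = (M choose Suc j) * Suc M * Suc j"
proof -
  have 1: "(Suc M - j) * (Suc M choose j) = Suc M * (M choose j)"
    using binomial_absorb_comp[of "Suc M" j] by simp
  have 2: "(M - j) * (M choose j) = Suc j * (M choose Suc j)"
    using binomial_absorb_comp[of M j] binomial_absorption[of j M] by simp
  have "((Suc M) choose j) * (Suc M - j) * (M - j) = Suc M * ((M - j) * (M choose j))"
    using 1 by (simp add: algebra_simps)
  also have "\<dots> = (M choose Suc j) * Suc M * Suc j" unfolding 2 by (simp only: ac_simps)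
  finally show ?thesis .
qed

definition Tm :: "nat \<Rightarrow> nat" where "Tm m = (\<Sum>i\<le>m. ((m - i) choose i) * 2 ^ i)"

lemma Tm_rec: "Tm (Suc (Suc m)) = Tm (Suc m) + 2 * Tm m"
proof -
  have "Tm (Suc (Suc m)) = 1 + (\<Sum>i\<le>Suc m. ((Suc (Suc m) - Suc i) choose Suc i) * 2 ^ Suc i)"
    unfolding Tm_def by (simp only: sum.atMost_Suc_shift) simp
  also have "(\<Sum>i\<le>Suc m. ((Suc (Suc m) - Suc i) choose Suc i) * 2 ^ Suc i)
     = (\<Sum>i\<le>Suc m. ((m - i) choose i) * 2 ^ Suc i) + (\<Sum>i\<le>Suc m. ((m - i) choose Suc i) * 2 ^ Suc i)"
  proof -
    have "((Suc (Suc m) - Suc i) choose Suc i) = ((m - i) choose i) + ((m - i) choose Suc i)" if "i \<le> Suc m" for i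
    proof (cases "i = Suc m")
      case True then show ?thesis by simp
    next
      case False
      then have "Suc (Suc m) - Suc i = Suc (m - i)" using that by simp
      then show ?thesis by simp
    qed
    then show ?thesis by (simp add: sum.distrib[symmetric] algebra_simps)
  qed
  also have "(\<Sum>i\<le>Suc m. ((m - i) choose i) * 2 ^ Suc i) = 2 * Tm m"
    by (simp add: Tm_def sum_distrib_left algebra_simps)
  also have "(\<Sum>i\<le>Suc m. ((m - i) choose Suc i) * 2 ^ Suc i) = (\<Sum>i\<le>m. ((m - i) choose Suc i) * 2 ^ Suc i)"
    by simp
  finally have X: "Tm (Suc (Suc m)) = 1 + (2 * Tm m + (\<Sum>i\<le>m. (m - i choose Suc i) * 2 ^ Suc i))" .
  have sh: "1 + (\<Sum>i\<le>m. ((m - i) choose Suc i) * 2 ^ Suc i) = Tm (Suc m)"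
  proof -
    have "Tm (Suc m) = (\<Sum>i\<le>Suc m. ((Suc m - i) choose i) * 2 ^ i)" by (simp add: Tm_def)
    also have "\<dots> = ((Suc m - 0) choose 0) * 2 ^ 0 + (\<Sum>i\<le>m. ((Suc m - Suc i) choose Suc i) * 2 ^ Suc i)"
      by (rule sum.atMost_Suc_shift)
    finally show ?thesis by simp
  qed
  show ?thesis using X sh by simp
qed

lemma Tm_0[simp]: "Tm 0 = 1" by (simp add: Tm_def)
lemma Tm_1[simp]: "Tm 1 = 1" by (simp add: Tm_def)
lemma Tm_Suc0[simp]: "Tm (Suc 0) = 1" by (simp add: Tm_def)

lemma J1: "Tm (Suc M) = 2 * (\<Sum>m<M. Tm m) + 1"
proof (induction M rule: nat_less_induct)
  case (1 M)
  show ?case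
  proof (cases M)
    case 0 then show ?thesis by simp
  next
    case (Suc M')
    then show ?thesis using 1[rule_format, of M'] Tm_rec[of M'] by simp
  qed
qed

lemma J2: "2 * (\<Sum>m<M. Tm m) + Tm M = 2 ^ (M + 1) - 1"
proof (induction M)
  case 0 then show ?case by simp
next
  case (Suc M)
  have "2 * (\<Sum>m<Suc M. Tm m) + Tm (Suc M) = 2 * (2 * (\<Sum>m<M. Tm m) + Tm M) + 1"
    using J1[of M] by simp
  also have "\<dots> = 2 ^ (Suc M + 1) - 1"
  proof -
    have a: "(2::nat) ^ (M + 1) \<ge> 1" by simp
    have "2 * (2 ^ (M + 1) - 1) + 1 = 2 * (2::nat) ^ (M + 1) - 1" using a by linarith
    then show ?thesis using Suc.IH by simp
  qed
  finally show ?case .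
qed

lemma J3: "Tm (Suc M) \<ge> 2 ^ M"
proof (induction M rule: nat_less_induct)
  case (1 M)
  show ?case
  proof (cases M)
    case 0 then show ?thesis by simp
  next
    case (Suc M')
    show ?thesis
    proof (cases M')
      case 0 then show ?thesis using Suc Tm_rec[of 0] by simp
    next
      case (Suc M'')
      have "Tm (Suc M) = Tm M + 2 * Tm M'" using Tm_rec[of M'] \<open>M = Suc M'\<close> by simp
      moreover have "Tm M \<ge> 2 ^ M'" using 1 \<open>M = Suc M'\<close> by simp
      moreover have "Tm M' \<ge> 2 ^ M''" using 1 \<open>M = Suc M'\<close> Suc by simp
      ultimately show ?thesis using \<open>M = Suc M'\<close> Suc by simp
    qed
  qed
qed

lemma step_abs:
  fixes B0 B1 C0 C1 K P1 Q R1 W :: nat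
  assumes h1: "B1 * P1 = B0 * W" and h2: "C1 * Q = C0 * R1" and ih: "2 * B0 * K \<le> C0"
    and pol: "4 * W * Q \<le> P1 * R1" and pP: "P1 > 0" and pQ: "Q > 0"
  shows "2 * B1 * (4 * K) \<le> C1"
proof -
  have "P1 * Q * (2 * B1 * (4 * K)) = 2 * K * (B1 * P1) * 4 * Q" by (simp add: ac_simps)
  also have "\<dots> = 2 * K * B0 * (4 * W * Q)" using h1 by (simp add: ac_simps)
  also have "\<dots> \<le> 2 * K * B0 * (P1 * R1)" using pol by (rule mult_le_mono2)
  also have "\<dots> = (2 * B0 * K) * (P1 * R1)" by (simp add: ac_simps)
  also have "\<dots> \<le> C0 * (P1 * R1)" using ih by (rule mult_le_mono1)
  also have "\<dots> = P1 * (C0 * R1)" by (simp add: ac_simps)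
  also have "\<dots> = P1 * Q * C1" using h2 by (simp add: ac_simps)
  finally show ?thesis using pP pQ by simp
qed

lemma pair_ineq:
  assumes "x \<le> p" "p + 2 \<le> 2 * x" "t < x"
  shows "2 * ((p - t) choose (x + t)) * 4 ^ t \<le> (p + 1 + t) choose (x - 1 - t)"
  using assms(3)
proof (induction t)
  case 0
  obtain j where j: "x = Suc j" using assms by (cases x) auto
  obtain d where d: "p = x + d" using assms(1) le_Suc_ex by blast
  obtain f where f: "x = d + 2 + f" using assms(2) d by (metis add.commute add_le_cancel_left le_Suc_ex mult_2 add.assoc)
  have id: "((Suc p) choose j) * (Suc p - j) * (p - j) = (p choose Suc j) * Suc p * Suc j"
    by (rule choose_id)
  have e1: "Suc p - j = d + 2" "p - j = d + 1" using j d by auto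
  have id2: "(Suc p choose j) * (d + 2) * (d + 1) = (p choose x) * Suc p * Suc j" using id unfolding e1 j .
  have pol: "2 * ((d + 2) * (d + 1)) \<le> Suc p * Suc j" using d f j by (simp add: algebra_simps)
  have "2 * (p choose x) * ((d + 2) * (d + 1)) = (p choose x) * (2 * ((d + 2) * (d + 1)))" by simp
  also have "\<dots> \<le> (p choose x) * (Suc p * Suc j)" using pol by (rule mult_le_mono2)
  also have "\<dots> = ((Suc p) choose j) * ((d + 2) * (d + 1))" using id2 by (simp only: mult.assoc)
  finally have "2 * (p choose x) * ((d + 2) * (d + 1)) \<le> ((Suc p) choose j) * ((d + 2) * (d + 1))" .
  then have "2 * (p choose x) \<le> (Suc p) choose j" unfolding mult_le_cancel2 by simp
  then show ?case using j by simp
next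
  case (Suc t)
  have tx: "t < x" using Suc.prems by simp
  have ih: "2 * ((p - t) choose (x + t)) * 4 ^ t \<le> (p + 1 + t) choose (x - 1 - t)" using Suc.IH tx by simp
  show ?case
  proof (cases "x + Suc t \<le> p - Suc t")
    case False
    then have z0: "(p - Suc t) choose (x + Suc t) = 0" by (simp add: binomial_eq_0)
    show ?thesis unfolding z0 by simp
  next
    case True
    define e where "e = p - x - (2 * t + 2)"
    have e: "p - x = 2 * t + 2 + e" using True unfolding e_def by linarith
    define f where "f = x - (2 * t + 4 + e)"
    have f: "x = 2 * t + 4 + e + f" using assms(1,2) e unfolding f_def by linarith
    have p: "p = 4 * t + 6 + 2 * e + f" using e f assms(1) by linarith
    define B0 where "B0 = (3*t+6+2*e+f) choose (3*t+4+e+f)"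
    define B1 where "B1 = (3*t+5+2*e+f) choose (3*t+5+e+f)"
    define C0 where "C0 = (5*t+7+2*e+f) choose (t+3+e+f)"
    define C1 where "C1 = (5*t+8+2*e+f) choose (t+2+e+f)"
    have i1: "B1 * ((3*t+6+2*e+f) * (3*t+5+e+f)) = B0 * ((e+2)*(e+1))"
      using choose_id[of "3*t+5+2*e+f" "3*t+4+e+f"] unfolding B0_def B1_def
      by (simp add: algebra_simps)
    have i2: "C1 * ((4*t+6+e)*(4*t+5+e)) = C0 * ((5*t+8+2*e+f)*(t+3+e+f))"
    proof -
      have r: "Suc (5*t+7+2*e+f) = 5*t+8+2*e+f" "Suc (5*t+7+2*e+f) - (t+2+e+f) = 4*t+6+e"
        "(5*t+7+2*e+f) - (t+2+e+f) = 4*t+5+e" "Suc (t+2+e+f) = t+3+e+f"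
        "5*t+8+2*e+f - (t+2+e+f) = 4*t+6+e" by simp_all
      have "C1 * (4*t+6+e) * (4*t+5+e) = C0 * (5*t+8+2*e+f) * (t+3+e+f)"
        using choose_id[of "5*t+7+2*e+f" "t+2+e+f"] unfolding r C0_def C1_def .
      then show ?thesis by (simp only: mult.assoc)
    qed
    have ih': "2 * B0 * 4 ^ t \<le> C0" using ih p f unfolding B0_def C0_def
      by (simp add: algebra_simps)
    have q1: "4 * ((e+1)*(4*t+6+e)) \<le> (3*t+6+2*e+f) * (5*t+8+2*e+f)"
      by (simp add: algebra_simps)
    have q2: "(e+2)*(4*t+5+e) \<le> (3*t+5+e+f) * (t+3+e+f)"
      by (simp add: algebra_simps)
    have pol: "4 * ((e+2)*(e+1)) * ((4*t+6+e)*(4*t+5+e)) \<le> ((3*t+6+2*e+f) * (3*t+5+e+f)) * ((5*t+8+2*e+f)*(t+3+e+f))"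
    proof -
      have "4 * ((e+2)*(e+1)) * ((4*t+6+e)*(4*t+5+e)) = (4 * ((e+1)*(4*t+6+e))) * ((e+2)*(4*t+5+e))"
        by (simp only: mult_ac)
      also have "\<dots> \<le> ((3*t+6+2*e+f) * (5*t+8+2*e+f)) * ((3*t+5+e+f) * (t+3+e+f))"
        using q1 q2 by (rule mult_le_mono)
      also have "\<dots> = ((3*t+6+2*e+f) * (3*t+5+e+f)) * ((5*t+8+2*e+f)*(t+3+e+f))"
        by (simp only: mult_ac)
      finally show ?thesis .
    qed
    have "2 * B1 * (4 * 4 ^ t) \<le> C1"
      by (rule step_abs[OF i1 i2 ih' pol]) auto
    then show ?thesis using p f unfolding B1_def C1_def by (simp add: algebra_simps)
  qed
qed

lemma half_ineq:
  assumes "x \<le> p" "p + 2 \<le> 2 * x"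
  shows "2 * (\<Sum>i\<in>{x..p+x}. ((p + x - i) choose i) * 2 ^ i) \<le> Tm (p + x)"
proof -
  define a where "a i = ((p + x - i) choose i) * (2::nat) ^ i" for i
  have x1: "x \<ge> 1" using assms by simp
  have z: "a i = 0" if "i > p + x \<or> i \<ge> 2 * x" for i
    using that assms x1 unfolding a_def by (auto simp: binomial_eq_0)
  define U where "U = {x..p+x} \<union> {x..<2*x}"
  have s1: "(\<Sum>i\<in>{x..p+x}. a i) = (\<Sum>i\<in>U. a i)"
    by (rule sum.mono_neutral_left) (auto simp: U_def z)
  have s2: "(\<Sum>i\<in>{x..<2*x}. a i) = (\<Sum>i\<in>U. a i)"
    by (rule sum.mono_neutral_left) (auto simp: U_def z)
  have s3: "(\<Sum>i\<in>{x..<2*x}. a i) = (\<Sum>t<x. a (x + t))"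
  proof -
    have "(\<Sum>i\<in>{0+x..<x+x}. a i) = (\<Sum>t\<in>{0..<x}. a (t + x))"
      by (rule sum.shift_bounds_nat_ivl)
    then show ?thesis by (simp add: mult_2 atLeast0LessThan add.commute)
  qed
  have s4: "(\<Sum>t<x. a (x + t)) \<le> (\<Sum>t<x. a (x - 1 - t))"
  proof (rule sum_mono)
    fix t assume "t \<in> {..<x}"
    then have t: "t < x" by simp
    have pi: "2 * ((p - t) choose (x + t)) * 4 ^ t \<le> (p + 1 + t) choose (x - 1 - t)"
      by (rule pair_ineq[OF assms t])
    have e1: "p + x - (x + t) = p - t" by simp
    have e2: "p + x - (x - 1 - t) = p + 1 + t" using t by simp
    have e3: "(2::nat) ^ (x + t) = 2 * 4 ^ t * 2 ^ (x - 1 - t)"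
    proof -
      have "x + t = Suc (2 * t) + (x - 1 - t)" using t by simp
      then have "(2::nat) ^ (x + t) = 2 ^ Suc (2 * t) * 2 ^ (x - 1 - t)" by (metis power_add)
      then show ?thesis by (simp add: power_mult)
    qed
    have "a (x + t) = (2 * ((p - t) choose (x + t)) * 4 ^ t) * 2 ^ (x - 1 - t)"
      unfolding a_def e1 e3 by (simp add: ac_simps)
    also have "\<dots> \<le> ((p + 1 + t) choose (x - 1 - t)) * 2 ^ (x - 1 - t)"
      using pi by (rule mult_le_mono1)
    also have "\<dots> = a (x - 1 - t)" unfolding a_def e2 ..
    finally show "a (x + t) \<le> a (x - 1 - t)" .
  qed
  have s5: "(\<Sum>t<x. a (x - 1 - t)) = (\<Sum>i<x. a i)"
  proof -
    have "(\<Sum>i\<in>{0..<x}. a i) = (\<Sum>i\<in>{0..<x}. a (x + 0 - Suc i))"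
      by (rule sum.atLeastLessThan_rev)
    then show ?thesis by (simp add: atLeast0LessThan)
  qed
  have s6: "Tm (p + x) = (\<Sum>i<x. a i) + (\<Sum>i\<in>{x..p+x}. a i)"
  proof -
    have "Tm (p + x) = (\<Sum>i\<in>{0..<Suc (p + x)}. a i)" unfolding Tm_def a_def
      by (simp add: atLeast0LessThan lessThan_Suc_atMost)
    also have "\<dots> = (\<Sum>i\<in>{0..<x}. a i) + (\<Sum>i\<in>{x..<Suc (p + x)}. a i)"
      using assms by (simp add: sum.atLeastLessThan_concat)
    finally show ?thesis by (simp add: atLeast0LessThan atLeastLessThanSuc_atLeastAtMost)
  qed
  have "(\<Sum>i\<in>{x..p+x}. a i) \<le> (\<Sum>i<x. a i)" using s1 s2 s3 s4 s5 by simp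
  then have "2 * (\<Sum>i\<in>{x..p+x}. a i) \<le> Tm (p + x)" using s6 by simp
  then show ?thesis unfolding a_def .
qed



lemma pow2_ge2: "(L::nat) \<ge> 1 \<Longrightarrow> (2::nat) ^ L \<ge> 2"
proof (induction L rule: nat_induct_at_least)
  case base then show ?case by simp
next
  case (Suc n) then show ?case by simp
qed

lemma lex_ltI: "length xs = length ys \<Longrightarrow> i < length xs \<Longrightarrow> take i xs = take i ys \<Longrightarrow> f (xs ! i) < f (ys ! i) \<Longrightarrow> lex_lt f xs ys"
  unfolding lex_lt_def by blast

lemma lex_irrefl: "\<not> lex_lt f xs xs" by (simp add: lex_lt_def)

lemma lex_trans:
  assumes "lex_lt f xs ys" "lex_lt f ys zs" shows "lex_lt f xs zs"
proof -
  obtain i where i: "i < length xs" "take i xs = take i ys" "f (xs ! i) < f (ys ! i)" "length xs = length ys"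
    using assms(1) unfolding lex_lt_def by blast
  obtain j where j: "j < length ys" "take j ys = take j zs" "f (ys ! j) < f (zs ! j)" "length ys = length zs"
    using assms(2) unfolding lex_lt_def by blast
  have nt: "a ! m = b ! m" if "take r a = take r b" "m < r" "m < length a" "m < length b" for a b :: "'a list" and m r
    using that by (metis nth_take)
  have tt: "take m a = take m b" if "take r a = take r b" "m \<le> r" for a b :: "'a list" and m r
    using that by (metis min.absorb1 take_take)
  consider "i < j" | "j < i" | "i = j" by linarith
  then show ?thesis
  proof cases
    case 1
    have a: "take i ys = take i zs" using tt[OF j(2)] 1 by simp
    have b: "ys ! i = zs ! i" using nt[OF j(2) 1] i j by simp
    have l: "length xs = length zs" using i j by simp
    have c: "take i xs = take i zs" using a i(2) by simp
    have d: "f (xs ! i) < f (zs ! i)" using b i(3) by simp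
    show ?thesis by (rule lex_ltI[OF l i(1) c d])
  next
    case 2
    have a: "take j xs = take j ys" using tt[OF i(2)] 2 by simp
    have b: "xs ! j = ys ! j" using nt[OF i(2) 2] i j 2 by simp
    have l: "length xs = length zs" using i j by simp
    have c: "take j xs = take j zs" using a j(2) by simp
    have d: "f (xs ! j) < f (zs ! j)" using b j(3) by simp
    have e: "j < length xs" using 2 i(1) by simp
    show ?thesis by (rule lex_ltI[OF l e c d])
  next
    case 3
    have l: "length xs = length zs" using i j by simp
    have c: "take i xs = take i zs" using i(2) j(2) 3 by simp
    have d: "f (xs ! i) < f (zs ! i)" using i(3) j(3) 3 by simp
    show ?thesis by (rule lex_ltI[OF l i(1) c d])
  qed
qed

lemma lex_total:
  assumes "inj f" "length xs = length ys" "xs \<noteq> ys"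
  shows "lex_lt f xs ys \<or> lex_lt f ys xs"
proof -
  have ex: "\<exists>i. i < length xs \<and> xs ! i \<noteq> ys ! i"
  proof (rule ccontr)
    assume "\<not> (\<exists>i. i < length xs \<and> xs ! i \<noteq> ys ! i)"
    then have "xs = ys" using assms(2) by (intro nth_equalityI) auto
    then show False using assms(3) by simp
  qed
  define i where "i = (LEAST i. i < length xs \<and> xs ! i \<noteq> ys ! i)"
  have i: "i < length xs" "xs ! i \<noteq> ys ! i" using LeastI_ex[OF ex] unfolding i_def by auto
  have lt: "xs ! m = ys ! m" if "m < i" for m
    using not_less_Least[of m "\<lambda>i. i < length xs \<and> xs ! i \<noteq> ys ! i"] that i(1) unfolding i_def by auto
  have tk: "take i xs = take i ys"
    by (rule nth_equalityI) (use i assms(2) lt in auto)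
  have "f (xs ! i) \<noteq> f (ys ! i)" using assms(1) i(2) by (meson injD)
  then consider "f (xs ! i) < f (ys ! i)" | "f (ys ! i) < f (xs ! i)" by linarith
  then show ?thesis
  proof cases
    case 1 then show ?thesis using i tk assms(2) lex_ltI[of xs ys i f] by simp
  next
    case 2 then show ?thesis using i tk assms(2) lex_ltI[of ys xs i f] by simp
  qed
qed

lemma inj_bit_idx: "inj bit_idx" by (rule injI) (simp add: bit_idx_def split: if_splits)

lemma card_Lw: "card {w :: bool list. length w = L} = 2 ^ L"
  using card_lists_length_eq[of "UNIV :: bool set" L] by simp

lemma finite_Lw: "finite {w :: bool list. length w = L}"
  using finite_lists_length_eq[of "UNIV :: bool set" L] by simp

definition Pre :: "nat \<Rightarrow> bool list set" where "Pre L = {w'. w' \<noteq> [] \<and> length w' < L}"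

lemma finite_Pre: "finite (Pre L)"
proof -
  have "Pre L \<subseteq> {w. set w \<subseteq> UNIV \<and> length w \<le> L}" by (auto simp: Pre_def)
  then show ?thesis using finite_lists_length_le[of "UNIV :: bool set" L] finite_subset by auto
qed

lemma card_Pre: "L \<ge> 1 \<Longrightarrow> card (Pre L) = 2 ^ L - 2"
proof (induction L rule: nat_induct_at_least)
  case base
  have "Pre 1 = {}" by (auto simp: Pre_def)
  then show ?case by simp
next
  case (Suc L)
  have "Pre (Suc L) = Pre L \<union> {w. length w = L}" using Suc.hyps by (auto simp: Pre_def)
  moreover have "Pre L \<inter> {w. length w = L} = {}" by (auto simp: Pre_def)
  ultimately have "card (Pre (Suc L)) = card (Pre L) + card {w :: bool list. length w = L}"
    using card_Un_disjoint[OF finite_Pre finite_Lw] by simp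
  also have "\<dots> = 2 ^ L - 2 + 2 ^ L" using Suc card_Lw by simp
  also have "\<dots> = 2 ^ Suc L - 2"
  proof -
    have "(2::nat) ^ L \<ge> 2" using Suc.hyps by (rule pow2_ge2)
    then show ?thesis by simp
  qed
  finally show ?case .
qed

definition BS :: "bool list \<Rightarrow> bool list set" where
  "BS w = Pre (length w) \<union> {w'. length w' = length w \<and> lex_lt bit_idx w' w}"

lemma bin_rank_BS: "bin_rank w = 1 + card (BS w)"
proof -
  have "{w'. w' \<noteq> [] \<and> (length w' < length w \<or> (length w' = length w \<and> lex_lt bit_idx w' w))} = BS w"
    by (auto simp: BS_def Pre_def lex_lt_def)
  then show ?thesis by (simp add: bin_rank_def)
qed

lemma finite_BS: "finite (BS w)"
proof -
  have "{w'. length w' = length w \<and> lex_lt bit_idx w' w} \<subseteq> {w'. length w' = length w}" by auto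
  then show ?thesis unfolding BS_def using finite_Pre finite_subset[OF _ finite_Lw] by blast
qed

lemma bin_rank_bounds:
  assumes "w \<noteq> []"
  shows "2 ^ length w - 1 \<le> bin_rank w" "bin_rank w \<le> 2 ^ (length w + 1) - 2"
proof -
  define L where "L = length w"
  have L1: "L \<ge> 1" using assms by (cases w) (auto simp: L_def)
  define Q where "Q = {w'. length w' = L \<and> lex_lt bit_idx w' w}"
  have disj: "Pre L \<inter> Q = {}" by (auto simp: Pre_def Q_def)
  have bsq: "BS w = Pre L \<union> Q" by (simp add: BS_def Q_def L_def)
  have fQ: "finite Q" unfolding Q_def by (rule finite_subset[OF _ finite_Lw[of L]]) auto
  have cBS: "card (BS w) = card (Pre L) + card Q"
    unfolding bsq by (rule card_Un_disjoint[OF finite_Pre fQ disj])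
  have "Q \<subseteq> {w'. length w' = L} - {w}" by (auto simp: Q_def L_def lex_irrefl)
  then have "card Q \<le> card ({w'. length w' = L} - {w})"
    by (rule card_mono[rotated]) (simp add: finite_Lw)
  also have "\<dots> = 2 ^ L - 1" using card_Lw by (simp add: L_def)
  finally have cQ: "card Q \<le> 2 ^ L - 1" .
  have p2: "(2::nat) ^ L \<ge> 2" using L1 by (rule pow2_ge2)
  show "2 ^ length w - 1 \<le> bin_rank w"
    using cBS card_Pre[OF L1] p2 unfolding bin_rank_BS L_def[symmetric] by simp
  show "bin_rank w \<le> 2 ^ (length w + 1) - 2"
    using cBS card_Pre[OF L1] p2 cQ unfolding bin_rank_BS L_def[symmetric] by simp
qed

lemma bin_rank_mono:
  assumes "lex_lt bit_idx w1 w2"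
  shows "bin_rank w1 < bin_rank w2"
proof -
  have len: "length w1 = length w2" using assms by (simp add: lex_lt_def)
  have "BS w1 \<subset> BS w2"
  proof
    show "BS w1 \<subseteq> BS w2"
    proof
      fix v assume "v \<in> BS w1"
      then show "v \<in> BS w2" using len lex_trans[OF _ assms, of v] by (auto simp: BS_def)
    qed
    have "w1 \<in> BS w2" using assms len by (simp add: BS_def)
    moreover have "w1 \<notin> BS w1" by (simp add: BS_def Pre_def lex_irrefl)
    ultimately show "BS w1 \<noteq> BS w2" by blast
  qed
  then have "card (BS w1) < card (BS w2)" using finite_BS by (simp add: psubset_card_mono)
  then show ?thesis by (simp add: bin_rank_BS)
qed

lemma bin_rank_inj:
  assumes "length w1 = length w2" "w1 \<noteq> w2"
  shows "bin_rank w1 \<noteq> bin_rank w2"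
proof
  assume e: "bin_rank w1 = bin_rank w2"
  from lex_total[OF inj_bit_idx assms] show False
  proof
    assume "lex_lt bit_idx w1 w2" then show False using bin_rank_mono[of w1 w2] e by simp
  next
    assume "lex_lt bit_idx w2 w1" then show False using bin_rank_mono[of w2 w1] e by simp
  qed
qed

lemma bin_rank_surj:
  assumes "L \<ge> 1" "2 ^ L - 1 \<le> j" "j \<le> 2 ^ (L + 1) - 2"
  shows "\<exists>w. length w = L \<and> bin_rank w = j"
proof -
  have sub: "bin_rank ` {w. length w = L} \<subseteq> {2 ^ L - 1 .. 2 ^ (L + 1) - 2}"
  proof (rule subsetI)
    fix r assume "r \<in> bin_rank ` {w. length w = L}"
    then obtain w where w: "length w = L" "r = bin_rank w" by blast
    then have "w \<noteq> []" using assms(1) by auto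
    then show "r \<in> {2 ^ L - 1 .. 2 ^ (L + 1) - 2}" using bin_rank_bounds[of w] w by simp
  qed
  have inj: "inj_on bin_rank {w. length w = L}"
  proof (rule inj_onI)
    fix a b assume "a \<in> {w. length w = L}" "b \<in> {w. length w = L}" "bin_rank a = bin_rank b"
    then show "a = b" using bin_rank_inj[of a b] by auto
  qed
  have "card (bin_rank ` {w. length w = L}) = 2 ^ L" using card_image[OF inj] card_Lw by simp
  moreover have "card {(2::nat) ^ L - 1 .. 2 ^ (L + 1) - 2} = 2 ^ L"
  proof -
    have p2: "(2::nat) ^ L \<ge> 2" using assms(1) by (rule pow2_ge2)
    then show ?thesis by simp
  qed
  ultimately have eq: "bin_rank ` {w. length w = L} = {2 ^ L - 1 .. 2 ^ (L + 1) - 2}"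
    using card_subset_eq[OF _ sub] by simp
  have "j \<in> bin_rank ` {w. length w = L}" unfolding eq using assms(2,3) by simp
  then show ?thesis by blast
qed

lemma aux_contra: "(X::nat) \<le> Y \<Longrightarrow> X \<ge> 2 \<Longrightarrow> Y - 1 \<le> j \<Longrightarrow> j \<le> X - 2 \<Longrightarrow> False"
  by linarith

lemma shortlex_len:
  assumes "L \<ge> 1" "2 ^ L - 1 \<le> j" "j \<le> 2 ^ (L + 1) - 2" "src_rank u = j"
  shows "length (shortlex_code u) = L"
proof -
  obtain w0 where w0: "length w0 = L" "bin_rank w0 = j" using bin_rank_surj[OF assms(1-3)] by blast
  have w0ne: "w0 \<noteq> []" using w0 assms(1) by (cases w0) auto
  have uniq: "w = w0" if "w \<noteq> [] \<and> bin_rank w = src_rank u" for w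
  proof -
    have bw: "bin_rank w = j" using that assms(4) by simp
    have "length w = L"
    proof (rule ccontr)
      assume ne: "length w \<noteq> L"
      have wne: "w \<noteq> []" using that by simp
      have b1: "2 ^ length w - 1 \<le> j" "j \<le> 2 ^ (length w + 1) - 2"
        using bin_rank_bounds[OF wne] bw by simp_all
      consider "length w < L" | "length w > L" using ne by linarith
      then show False
      proof cases
        case 1
        then have "length w + 1 \<le> L" by simp
        then have p: "(2::nat) ^ (length w + 1) \<le> 2 ^ L" by (rule power_increasing) simp
        have q: "(2::nat) ^ (length w + 1) \<ge> 2" by (rule pow2_ge2) simp
        show False by (rule aux_contra[OF p q assms(2) b1(2)])
      next
        case 2
        then have "L + 1 \<le> length w" by simp
        then have p: "(2::nat) ^ (L + 1) \<le> 2 ^ length w" by (rule power_increasing) simp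
        have q: "(2::nat) ^ (L + 1) \<ge> 2" by (rule pow2_ge2) simp
        show False by (rule aux_contra[OF p q b1(1) assms(3)])
      qed
    qed
    show ?thesis
    proof (rule ccontr)
      assume "w \<noteq> w0"
      then have "bin_rank w \<noteq> bin_rank w0" using bin_rank_inj[of w w0] \<open>length w = L\<close> w0(1) by simp
      then show False using bw w0(2) by simp
    qed
  qed
  have "shortlex_code u = w0"
    unfolding shortlex_code_def
  proof (rule the_equality)
    show "w0 \<noteq> [] \<and> bin_rank w0 = src_rank u" using w0ne w0(2) assms(4) by simp
  next
    fix w assume "w \<noteq> [] \<and> bin_rank w = src_rank u"
    then show "w = w0" by (rule uniq)
  qed
  then show ?thesis using w0 by simp
qed



definition As :: "nat \<Rightarrow> sym list set" where "As k = {u. admissible u \<and> wt u = k}"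

lemma Kc_eq_iff: "admissible u \<Longrightarrow> (Kc u = real k) = (wt u = k)"
  by (simp add: Kc_wt)

lemma finite_le: "finite {u :: sym list. length u \<le> k}"
  using finite_lists_length_le[of "UNIV :: sym set" k] by simp

lemma finite_wt_le: "finite {u. admissible u \<and> wt u \<le> k}"
proof (rule finite_subset[OF _ finite_le[of k]])
  show "{u. admissible u \<and> wt u \<le> k} \<subseteq> {u. length u \<le> k}"
    by (auto simp: wt_def)
qed

lemma finite_As: "finite (As k)"
  by (rule finite_subset[OF _ finite_wt_le[of k]]) (auto simp: As_def)

lemma S_cnt_As: "S_cnt k = card (As k)"
proof -
  have "{u. admissible u \<and> Kc u = real k} = As k" by (auto simp: As_def Kc_eq_iff)
  then show ?thesis by (simp add: S_cnt_def)
qed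

lemma N_cnt_As: "N_cnt k l = card {u \<in> As k. length u = l}"
proof -
  have "{u. admissible u \<and> length u = l \<and> Kc u = real k} = {u \<in> As k. length u = l}"
    by (auto simp: As_def Kc_eq_iff)
  then show ?thesis by (simp add: N_cnt_def)
qed

lemma card_As_len: "card {u \<in> As k. length u < n} = (\<Sum>l<n. N_cnt k l)"
proof -
  have "{u \<in> As k. length u < n} = (\<Union>l\<in>{..<n}. {u \<in> As k. length u = l})" by auto
  then have "card {u \<in> As k. length u < n} = card (\<Union>l\<in>{..<n}. {u \<in> As k. length u = l})" by simp
  also have "\<dots> = (\<Sum>l<n. card {u \<in> As k. length u = l})"
    by (rule card_UN_disjoint) (auto intro: finite_subset[OF _ finite_As])
  finally show ?thesis by (simp add: N_cnt_As)
qed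

lemma S_sum: "S_cnt k = (\<Sum>l<k. N_cnt k l)"
proof -
  have "As k = {u \<in> As k. length u < k}" by (auto simp: As_def wt_def)
  then show ?thesis using card_As_len[of k k] S_cnt_As by simp
qed

lemma Nf_sum:
  assumes "1 \<le> a" "b < k" "a \<le> b"
  shows "(\<Sum>l\<in>{a..b}. Nf k l) = 4 * (\<Sum>i\<in>{k-1-b..k-1-a}. ((k-2-i) choose i) * 2^i)"
proof -
  have "(\<Sum>l\<in>{a..b}. Nf k l) = (\<Sum>i\<in>{k-1-b..k-1-a}. 4 * (((k-2-i) choose i) * 2^i))"
  proof (rule sum.reindex_bij_witness[of _ "\<lambda>i. k - 1 - i" "\<lambda>l. k - 1 - l"])
    fix l assume l: "l \<in> {a..b}"
    then show "k - 1 - (k - 1 - l) = l" using assms by auto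
    show "k - 1 - l \<in> {k-1-b..k-1-a}" using l assms by auto
    have e1: "k - 2 - (k - 1 - l) = l - 1" using l assms by auto
    have e2: "k - 1 - l = k - l - 1" by simp
    show "4 * (((k-2-(k - 1 - l)) choose (k - 1 - l)) * 2^(k - 1 - l)) = Nf k l"
      unfolding e1 Nf_def using l assms by auto
  next
    fix i assume i: "i \<in> {k-1-b..k-1-a}"
    then show "k - 1 - (k - 1 - i) = i" using assms by auto
    show "k - 1 - i \<in> {a..b}" using i assms by auto
  qed
  then show ?thesis by (simp add: sum_distrib_left)
qed

lemma S_val: "S_cnt k = (if 2 \<le> k then 4 * Tm (k - 2) else 0)"
proof (cases "2 \<le> k")
  case True
  have "S_cnt k = (\<Sum>l\<in>{0..<k}. Nf k l)" by (simp add: S_sum N_cnt_eq atLeast0LessThan)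
  also have "\<dots> = Nf k 0 + (\<Sum>l\<in>{Suc 0..<k}. Nf k l)" using True by (simp add: sum.atLeast_Suc_lessThan)
  also have "{Suc 0..<k} = {1..k-1}" using True by auto
  also have "(\<Sum>l\<in>{1..k-1}. Nf k l) = 4 * (\<Sum>i\<in>{k-1-(k-1)..k-1-1}. ((k-2-i) choose i) * 2^i)"
    using True by (intro Nf_sum) auto
  also have "{k-1-(k-1)..k-1-1} = {..k-2}" by auto
  finally show ?thesis using True by (simp add: Nf_def Tm_def)
next
  case False
  then have "N_cnt k l = 0" for l by (simp add: N_cnt_eq Nf_def)
  then show ?thesis using False by (simp add: S_sum)
qed

lemma Tk_card: "card {u. admissible u \<and> wt u < k} = (\<Sum>k'<k. S_cnt k')"
proof -
  have "{u. admissible u \<and> wt u < k} = (\<Union>k'\<in>{..<k}. As k')" by (auto simp: As_def)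
  then have "card {u. admissible u \<and> wt u < k} = card (\<Union>k'\<in>{..<k}. As k')" by simp
  also have "\<dots> = (\<Sum>k'<k. card (As k'))"
    apply (rule card_UN_disjoint)
      apply simp
     apply (simp add: finite_As)
    apply (auto simp: As_def)
    done
  finally show ?thesis by (simp add: S_cnt_As)
qed

lemma Tk_val: "(\<Sum>k'<k. S_cnt k') = 4 * (\<Sum>m<k-2. Tm m)"
proof (induction k)
  case 0 then show ?case by simp
next
  case (Suc k)
  show ?case
  proof (cases "2 \<le> k")
    case True
    have "Suc k - 2 = Suc (k - 2)" using True by simp
    then show ?thesis using Suc True by (simp add: S_val)
  next
    case False
    then have "Suc k - 2 = 0" "k - 2 = 0" by auto
    then show ?thesis using Suc False by (simp add: S_val)
  qed
qed

lemma WN_val: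
  assumes "k = n + 1 + x" "n \<ge> 1"
  shows "W_lt n k + N_cnt k n = 4 * (\<Sum>i\<in>{x..k-2}. ((k-2-i) choose i) * 2^i)"
proof -
  have "W_lt n k + N_cnt k n = (\<Sum>l\<in>{1..<Suc n}. N_cnt k l)"
    using assms by (simp add: W_lt_def sum.atLeastLessThan_Suc)
  also have "\<dots> = (\<Sum>l\<in>{1..n}. Nf k l)" by (simp add: N_cnt_eq atLeastLessThanSuc_atLeastAtMost)
  also have "\<dots> = 4 * (\<Sum>i\<in>{k-1-n..k-1-1}. ((k-2-i) choose i) * 2^i)"
    using assms by (intro Nf_sum) auto
  also have "{k-1-n..k-1-1} = {x..k-2}" using assms by auto
  finally show ?thesis .
qed

lemma W_card: "card {u \<in> As k. length u < n} = W_lt n k"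
proof (cases n)
  case 0 then show ?thesis by (simp add: W_lt_def)
next
  case (Suc n')
  have "card {u \<in> As k. length u < n} = (\<Sum>l\<in>{0..<n}. N_cnt k l)" by (simp add: card_As_len atLeast0LessThan)
  also have "\<dots> = N_cnt k 0 + (\<Sum>l\<in>{Suc 0..<n}. N_cnt k l)" using Suc by (simp add: sum.atLeast_Suc_lessThan)
  finally show ?thesis by (simp add: W_lt_def N_cnt_eq Nf_def)
qed

lemma src_before_iff:
  assumes "admissible v" "admissible u" "wt u = k" "length u = n"
  shows "src_before v u \<longleftrightarrow> wt v < k \<or> (wt v = k \<and> (length v < n \<or> (length v = n \<and> lex_lt sym_idx v u)))"
  using assms by (simp add: src_before_def Kc_wt)

lemma rank_bounds:
  assumes "admissible u" "length u = n" "wt u = k"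
  shows "1 + (\<Sum>k'<k. S_cnt k') \<le> src_rank u" "src_rank u \<le> (\<Sum>k'<k. S_cnt k') + W_lt n k + N_cnt k n"
proof -
  define R where "R = {v. admissible v \<and> src_before v u}"
  have R: "R = {v. admissible v \<and> (wt v < k \<or> (wt v = k \<and> (length v < n \<or> (length v = n \<and> lex_lt sym_idx v u))))}"
    unfolding R_def using src_before_iff[OF _ assms(1,3,2)] by blast
  have fR: "finite R" unfolding R by (rule finite_subset[OF _ finite_wt_le[of k]]) auto
  have "{u. admissible u \<and> wt u < k} \<subseteq> R" unfolding R by auto
  then have "card {u. admissible u \<and> wt u < k} \<le> card R" using fR by (rule card_mono[rotated])
  then show "1 + (\<Sum>k'<k. S_cnt k') \<le> src_rank u" by (simp add: src_rank_def R_def Tk_card)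
  have sub: "R \<subseteq> {v. admissible v \<and> wt v < k} \<union> {v \<in> As k. length v < n} \<union> ({v \<in> As k. length v = n} - {u})"
    unfolding R by (auto simp: As_def lex_irrefl)
  have uin: "u \<in> {v \<in> As k. length v = n}" using assms by (simp add: As_def)
  have fN: "finite {v \<in> As k. length v = n}" by (rule finite_subset[OF _ finite_As]) auto
  have "card R \<le> card ({v. admissible v \<and> wt v < k} \<union> {v \<in> As k. length v < n} \<union> ({v \<in> As k. length v = n} - {u}))"
    by (rule card_mono[OF _ sub]) (auto intro: finite_subset[OF _ finite_As] finite_subset[OF _ finite_wt_le[of k]])
  also have "\<dots> \<le> card ({v. admissible v \<and> wt v < k} \<union> {v \<in> As k. length v < n}) + card ({v \<in> As k. length v = n} - {u})"
    by (rule card_Un_le)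
  also have "\<dots> \<le> card {v. admissible v \<and> wt v < k} + card {v \<in> As k. length v < n} + card ({v \<in> As k. length v = n} - {u})"
    using card_Un_le by simp
  also have "card ({v \<in> As k. length v = n} - {u}) = N_cnt k n - 1"
    using uin fN by (simp add: N_cnt_As)
  finally have "card R \<le> (\<Sum>k'<k. S_cnt k') + W_lt n k + (N_cnt k n - 1)"
    by (simp add: Tk_card W_card)
  moreover have "N_cnt k n \<ge> 1"
  proof -
    have "card {v \<in> As k. length v = n} > 0" using uin fN card_gt_0_iff by blast
    then show ?thesis by (simp add: N_cnt_As)
  qed
  ultimately show "src_rank u \<le> (\<Sum>k'<k. S_cnt k') + W_lt n k + N_cnt k n"
    by (simp add: src_rank_def R_def)
qed



lemma witness:
  assumes "x \<le> n - 1" "n \<ge> 1"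
  shows "admissible (replicate x C @ replicate (n - x) A) \<and> length (replicate x C @ replicate (n - x) A) = n
     \<and> cdn (replicate x C @ replicate (n - x) A) = x"
proof -
  define u where "u = replicate x C @ replicate (n - x) A"
  have len: "length u = n" using assms by (simp add: u_def)
  have nth: "u ! i = (if i < x then C else A)" if "i < n" for i
    using that assms by (simp add: u_def nth_append)
  have adm: "admissible u"
    unfolding admissible_def
  proof (intro conjI allI impI)
    show "u \<noteq> []" using len assms by auto
    fix i assume "i < length u - 1"
    then have i: "i < n - 1" using len by simp
    show "trans_prob (u ! i) (u ! (i + 1)) > 0"
    proof (cases "i < x")
      case True then show ?thesis using nth[of i] i by simp
    next
      case False
      then show ?thesis using nth[of i] nth[of "i+1"] i by simp
    qed
  qed
  have "butlast u = replicate x C @ replicate (n - x - 1) A"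
  proof -
    have "n - x \<noteq> 0" using assms by simp
    then show ?thesis by (simp add: u_def butlast_append butlast_conv_take)
  qed
  then have "cdn u = x" by (simp add: cdn_def isCD_def)
  then show ?thesis using adm len by (simp add: u_def)
qed

theorem mainTheorem9:
  fixes n x :: nat
  assumes "n \<ge> 2" and "x \<le> n - 1" and "real x \<ge> (real n + 1) / 2"
  shows "g_fun n x = 1 \<and> V_val n (n + 1 + x) \<ge> real (N_cnt (n + 1 + x) n)"
proof -
  define k where "k = n + 1 + x"
  define M where "M = k - 2"
  have "real (n + 1) \<le> real (2 * x)" using assms(3) by simp
  then have x2: "n + 1 \<le> 2 * x" by (simp only: of_nat_le_iff)
  have kM: "k = M + 2" "M = (n - 1) + x" using assms(1) by (simp_all add: k_def M_def)
  have half: "2 * (\<Sum>i\<in>{x..(n - 1) + x}. (((n - 1) + x - i) choose i) * 2 ^ i) \<le> Tm ((n - 1) + x)"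
    by (rule half_ineq) (use assms(2) x2 assms(1) in auto)
  have WN: "W_lt n k + N_cnt k n = 4 * (\<Sum>i\<in>{x..k-2}. ((k-2-i) choose i) * 2^i)"
    by (rule WN_val) (use assms(1) k_def in auto)
  have S: "S_cnt k = 4 * Tm M" using kM by (simp add: S_val)
  have WN2: "2 * (W_lt n k + N_cnt k n) \<le> 4 * Tm M"
    using WN half kM by simp
  have Vpart: "V_val n k \<ge> real (N_cnt k n)"
  proof -
    have "2 * (real (W_lt n k) + real (N_cnt k n)) \<le> real (S_cnt k)"
      using WN2 S by (metis of_nat_add of_nat_le_iff of_nat_mult of_nat_numeral)
    then show ?thesis by (simp add: V_val_def)
  qed
  define Sg where "Sg = (\<Sum>m<M. Tm m)"
  have Tk: "(\<Sum>k'<k. S_cnt k') = 4 * Sg" using Tk_val[of k] by (simp add: Sg_def M_def)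
  have j2: "2 * Sg + Tm M = 2 ^ (M + 1) - 1" using J2[of M] by (simp add: Sg_def)
  have j1: "Tm (Suc M) = 2 * Sg + 1" using J1[of M] by (simp add: Sg_def)
  have j3: "Tm (Suc M) \<ge> 2 ^ M" by (rule J3)
  have Iall: "I_ind u" if u: "length u = n" "admissible u" "cd_count u = x" for u
  proof -
    have wtu: "wt u = k" using u by (simp add: wt_def k_def cd_count_eq)
    have rb1: "1 + 4 * Sg \<le> src_rank u" using rank_bounds(1)[OF u(2) u(1) wtu] Tk by simp
    have rb2: "src_rank u \<le> 4 * Sg + W_lt n k + N_cnt k n" using rank_bounds(2)[OF u(2) u(1) wtu] Tk by simp
    have p1: "(2::nat) ^ (M + 1) \<ge> 1" by simp
    have lo: "2 ^ (M + 1) - 1 \<le> src_rank u"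
    proof -
      have "(2::nat) ^ (M + 1) = 2 * 2 ^ M" by simp
      then show ?thesis using rb1 j1 j3 by linarith
    qed
    have hi: "src_rank u \<le> 2 ^ (M + 1 + 1) - 2"
    proof -
      have e: "(2::nat) ^ (M + 1 + 1) = 2 * 2 ^ (M + 1)" by simp
      have a: "2 * Sg + Tm M + 1 = 2 ^ (M + 1)" using j2 p1 by linarith
      have b: "W_lt n k + N_cnt k n \<le> 2 * Tm M" using WN2 by simp
      have c: "src_rank u + 2 \<le> 2 ^ (M + 1 + 1)" using rb2 a b e by linarith
      have d: "(2::nat) \<le> 2 ^ (M + 1 + 1)" using e p1 by linarith
      show ?thesis using c d by (simp add: le_diff_conv2)
    qed
    have "length (shortlex_code u) = M + 1"
      by (rule shortlex_len[OF _ lo hi refl]) simp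
    moreover have "Kc u = real k" using Kc_wt[OF u(2)] wtu by simp
    ultimately show ?thesis unfolding I_ind_def using kM by simp
  qed
  define D where "D = {u. length u = n \<and> admissible u \<and> cd_count u = x}"
  have num: "{u. length u = n \<and> admissible u \<and> cd_count u = x \<and> I_ind u} = D"
    unfolding D_def using Iall by blast
  have fD: "finite D" unfolding D_def by (rule finite_subset[OF _ finite_len[of n]]) auto
  have neD: "D \<noteq> {}"
  proof -
    have "replicate x C @ replicate (n - x) A \<in> D"
      using witness[OF assms(2)] assms(1) by (simp add: D_def cd_count_eq)
    then show ?thesis by blast
  qed
  have pos: "0 < sum str_prob D"
    by (rule sum_pos[OF fD neD]) (simp add: D_def sp_wt)
  have "g_fun n x = 1" unfolding g_fun_def num D_def[symmetric] using pos by simp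
  then show ?thesis using Vpart by (simp add: k_def)
qed


end
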